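(* Let $Q$ be an acyclic quiver and $W=0$ (so $\mathcal{A}=\mathrm{rep}(Q)$). Then $(Q,W)$ is genteel: the only self-stable objects of $\mathcal{A}$ are the simple representations $S_i$, $i\in V(Q)$.
   Context: $Q$ is a quiver with finite vertex set $V(Q)$; acyclic means it has no oriented cycles. $\mathcal{A}$ is the category of finite-dimensional representations of $Q$, $S_i$ the one-dimensional simple representation at vertex $i$. $N=\mathbb{Z}^{V(Q)}$ with basis $(e_i)$, $[E]\in N$ the dimension vector. The skew form $\langle-,-\rangle$ on $N$ is $\langle e_i,e_j\rangle=a_{ji}-a_{ij}$, where $a_{ij}$ is the number of arrows from $i$ to $j$; write $\langle A,B\rangle=\langle[A],[B]\rangle$. For $\theta\in\mathrm{Hom}(N,\mathbb{R})$, a nonzero object $E$ is $\theta$-stable if $\theta(E)=0$ and every proper nonzero subobject $A\subset E$ satisfies $\theta(A)<0$. An object $E$ is self-stable if it is $\theta$-stable for $\theta=\langle-,[E]\rangle$ (equivalently, $E\neq0$ and every non-trivial short exact sequence $0\to A\to E\to B\to0$ has $\langle A,B\rangle<0$). A quiver with potential is genteel if the only self-stable objects are of the form $S_i$. *)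

theory Defs
  imports Complex_Main
begin

definition quiver :: "'v set \<Rightarrow> 'a set \<Rightarrow> ('a \<Rightarrow> 'v) \<Rightarrow> ('a \<Rightarrow> 'v) \<Rightarrow> bool" where
  "quiver V Ar s t \<longleftrightarrow> finite V \<and> finite Ar \<and> (\<forall>a\<in>Ar. s a \<in> V \<and> t a \<in> V)"

definition quiver_acyclic :: "'a set \<Rightarrow> ('a \<Rightarrow> 'v) \<Rightarrow> ('a \<Rightarrow> 'v) \<Rightarrow> bool" where
  "quiver_acyclic Ar s t \<longleftrightarrow> acyclic {(s a, t a) | a. a \<in> Ar}"

definition n_arrows :: "'a set \<Rightarrow> ('a \<Rightarrow> 'v) \<Rightarrow> ('a \<Rightarrow> 'v) \<Rightarrow> 'v \<Rightarrow> 'v \<Rightarrow> int" where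
  "n_arrows Ar s t i j = int (card {a\<in>Ar. s a = i \<and> t a = j})"

definition skew_form :: "'v set \<Rightarrow> 'a set \<Rightarrow> ('a \<Rightarrow> 'v) \<Rightarrow> ('a \<Rightarrow> 'v) \<Rightarrow>
    ('v \<Rightarrow> int) \<Rightarrow> ('v \<Rightarrow> int) \<Rightarrow> int" where
  "skew_form V Ar s t x y =
     (\<Sum>i\<in>V. \<Sum>j\<in>V. x i * y j * (n_arrows Ar s t j i - n_arrows Ar s t i j))"

text \<open>A finite-dimensional representation of the quiver over a field 'k, realised inside an
  ambient k-vector space 'e (with scalar multiplication scale): a finite-dimensional subspace
  X i for every vertex i and, for every arrow a, a linear map f a sending X (s a) into X (t a)
  (only its restriction to X (s a) is relevant).\<close>
definition fin_dim_subspace :: "('k::field \<Rightarrow> 'e::ab_group_add \<Rightarrow> 'e) \<Rightarrow> 'e set \<Rightarrow> bool" where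
  "fin_dim_subspace scale U \<longleftrightarrow>
     module.subspace scale U \<and> (\<exists>B. finite B \<and> B \<subseteq> U \<and> module.span scale B = U)"

definition quiver_rep :: "('k::field \<Rightarrow> 'e::ab_group_add \<Rightarrow> 'e) \<Rightarrow> 'v set \<Rightarrow> 'a set \<Rightarrow>
    ('a \<Rightarrow> 'v) \<Rightarrow> ('a \<Rightarrow> 'v) \<Rightarrow> ('v \<Rightarrow> 'e set) \<Rightarrow> ('a \<Rightarrow> 'e \<Rightarrow> 'e) \<Rightarrow> bool" where
  "quiver_rep scale V Ar s t X f \<longleftrightarrow>
     (\<forall>i\<in>V. fin_dim_subspace scale (X i)) \<and>
     (\<forall>a\<in>Ar. Vector_Spaces.linear scale scale (f a) \<and> f a ` X (s a) \<subseteq> X (t a))"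

definition dim_vec :: "('k::field \<Rightarrow> 'e::ab_group_add \<Rightarrow> 'e) \<Rightarrow> 'v set \<Rightarrow> ('v \<Rightarrow> 'e set) \<Rightarrow> 'v \<Rightarrow> int" where
  "dim_vec scale V X i = (if i \<in> V then int (vector_space.dim scale (X i)) else 0)"

definition subrep :: "('k::field \<Rightarrow> 'e::ab_group_add \<Rightarrow> 'e) \<Rightarrow> 'v set \<Rightarrow> 'a set \<Rightarrow>
    ('a \<Rightarrow> 'v) \<Rightarrow> ('a \<Rightarrow> 'v) \<Rightarrow> ('v \<Rightarrow> 'e set) \<Rightarrow> ('a \<Rightarrow> 'e \<Rightarrow> 'e) \<Rightarrow> ('v \<Rightarrow> 'e set) \<Rightarrow> bool" where
  "subrep scale V Ar s t X f U \<longleftrightarrow>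
     (\<forall>i\<in>V. module.subspace scale (U i) \<and> U i \<subseteq> X i) \<and>
     (\<forall>a\<in>Ar. f a ` U (s a) \<subseteq> U (t a))"

definition rep_nonzero :: "'v set \<Rightarrow> ('v \<Rightarrow> 'e::zero set) \<Rightarrow> bool" where
  "rep_nonzero V X \<longleftrightarrow> (\<exists>i\<in>V. X i \<noteq> {0})"

definition theta_stable :: "('k::field \<Rightarrow> 'e::ab_group_add \<Rightarrow> 'e) \<Rightarrow> 'v set \<Rightarrow> 'a set \<Rightarrow>
    ('a \<Rightarrow> 'v) \<Rightarrow> ('a \<Rightarrow> 'v) \<Rightarrow> (('v \<Rightarrow> int) \<Rightarrow> real) \<Rightarrow> ('v \<Rightarrow> 'e set) \<Rightarrow> ('a \<Rightarrow> 'e \<Rightarrow> 'e) \<Rightarrow> bool" where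
  "theta_stable scale V Ar s t \<theta> X f \<longleftrightarrow>
     rep_nonzero V X \<and> \<theta> (dim_vec scale V X) = 0 \<and>
     (\<forall>U. subrep scale V Ar s t X f U \<and> rep_nonzero V U \<and> (\<exists>i\<in>V. U i \<noteq> X i)
          \<longrightarrow> \<theta> (dim_vec scale V U) < 0)"

definition self_stable :: "('k::field \<Rightarrow> 'e::ab_group_add \<Rightarrow> 'e) \<Rightarrow> 'v set \<Rightarrow> 'a set \<Rightarrow>
    ('a \<Rightarrow> 'v) \<Rightarrow> ('a \<Rightarrow> 'v) \<Rightarrow> ('v \<Rightarrow> 'e set) \<Rightarrow> ('a \<Rightarrow> 'e \<Rightarrow> 'e) \<Rightarrow> bool" where
  "self_stable scale V Ar s t X f \<longleftrightarrow>
     theta_stable scale V Ar s t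
       (\<lambda>x. real_of_int (skew_form V Ar s t x (dim_vec scale V X))) X f"

definition iso_simple :: "('k::field \<Rightarrow> 'e::ab_group_add \<Rightarrow> 'e) \<Rightarrow> 'v set \<Rightarrow> 'a set \<Rightarrow>
    ('a \<Rightarrow> 'v) \<Rightarrow> ('a \<Rightarrow> 'v) \<Rightarrow> ('v \<Rightarrow> 'e set) \<Rightarrow> ('a \<Rightarrow> 'e \<Rightarrow> 'e) \<Rightarrow> 'v \<Rightarrow> bool" where
  "iso_simple scale V Ar s t X f i \<longleftrightarrow>
     vector_space.dim scale (X i) = 1 \<and> (\<forall>j\<in>V. j \<noteq> i \<longrightarrow> X j = {0}) \<and>
     (\<forall>a\<in>Ar. \<forall>x\<in>X (s a). f a x = 0)"

end

theory Submission
  imports Defs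
begin

theorem mainTheorem14:
  fixes scale :: "'k::field \<Rightarrow> 'e::ab_group_add \<Rightarrow> 'e"
    and V :: "'v set" and Ar :: "'a set" and s t :: "'a \<Rightarrow> 'v"
    and X :: "'v \<Rightarrow> 'e set" and f :: "'a \<Rightarrow> 'e \<Rightarrow> 'e"
  assumes "vector_space scale"
    and "quiver V Ar s t"
    and "quiver_acyclic Ar s t"
    and "quiver_rep scale V Ar s t X f"
    and "self_stable scale V Ar s t X f"
  shows "\<exists>i\<in>V. iso_simple scale V Ar s t X f i"
proof -
  interpret vs: vector_space scale by fact
  have Xsub: "\<And>j. j \<in> V \<Longrightarrow> vs.subspace (X j)"
    using assms(4) by (auto simp: quiver_rep_def fin_dim_subspace_def)
  have lin: "\<And>a. a \<in> Ar \<Longrightarrow> Vector_Spaces.linear scale scale (f a)"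
    and fmap: "\<And>a. a \<in> Ar \<Longrightarrow> f a ` X (s a) \<subseteq> X (t a)"
    using assms(4) by (auto simp: quiver_rep_def)
  have f0: "\<And>a. a \<in> Ar \<Longrightarrow> f a 0 = 0"
    using lin by (metis module_hom.zero module_hom_iff_linear)
  have stv: "s a \<in> V" "t a \<in> V" if "a \<in> Ar" for a
    using assms(2) that by (auto simp: quiver_def)
  have finV: "finite V" using assms(2) by (simp add: quiver_def)
  have dim0: "vs.dim {0} = 0"
    using vs.dim_le_card[of "{0}" "{}"] by simp
  define R where "R = {(s a, t a) | a. a \<in> Ar}"
  have finR: "finite R"
  proof -
    have "R = (\<lambda>a. (s a, t a)) ` Ar" unfolding R_def by auto
    then show ?thesis using assms(2) by (simp add: quiver_def)
  qed
  have acR: "acyclic R" using assms(3) by (simp add: quiver_acyclic_def R_def)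
  have noloop: "s a \<noteq> t a" if "a \<in> Ar" for a
  proof
    assume "s a = t a"
    then have "(s a, s a) \<in> R" using that unfolding R_def by force
    then show False using acR by (auto simp: acyclic_def)
  qed
  define d where "d = dim_vec scale V X"
  define th where "th = (\<lambda>x. real_of_int (skew_form V Ar s t x d))"
  have stab: "rep_nonzero V X"
    "\<And>U. subrep scale V Ar s t X f U \<Longrightarrow> rep_nonzero V U \<Longrightarrow> (\<exists>i\<in>V. U i \<noteq> X i)
       \<Longrightarrow> th (dim_vec scale V U) < 0"
    using assms(5) unfolding self_stable_def theta_stable_def th_def d_def by blast+
  define S where "S = {j\<in>V. X j \<noteq> {0}}"
  have "S \<noteq> {}" using stab(1) by (auto simp: S_def rep_nonzero_def)
  moreover have "wf (R\<inverse>)" using finR acR by (rule finite_acyclic_wf_converse)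
  ultimately obtain i where iS: "i \<in> S" and sink0: "\<And>y. (y, i) \<in> R\<inverse> \<Longrightarrow> y \<notin> S"
    using wfE_min' by metis
  have sink: "\<And>y. (i, y) \<in> R \<Longrightarrow> y \<notin> S" using sink0 by simp
  have iV: "i \<in> V" and Xi: "X i \<noteq> {0}" using iS by (auto simp: S_def)
  have dnn: "\<And>j. d j \<ge> 0" by (simp add: d_def dim_vec_def)
  have dz: "\<And>j. j \<in> V \<Longrightarrow> X j = {0} \<Longrightarrow> d j = 0"
    by (simp add: d_def dim_vec_def dim0)
  have nn: "n_arrows Ar s t k j \<ge> 0" for k j by (simp add: n_arrows_def)
  have no_out: "d j * n_arrows Ar s t i j = 0" if "j \<in> V" "j \<noteq> i" for j
  proof (cases "X j = {0}")
    case True then show ?thesis using dz that by simp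
  next
    case False
    then have "j \<in> S" using that by (simp add: S_def)
    then have "(i, j) \<notin> R" using sink by blast
    then have e: "{a\<in>Ar. s a = i \<and> t a = j} = {}" unfolding R_def by blast
    show ?thesis unfolding n_arrows_def e by simp
  qed
  define U where "U = (\<lambda>j. if j = i then X i else {0::'e})"
  have sub0: "vs.subspace {0}"
    using vs.subspace_span[of "{}"] by simp
  have subU: "subrep scale V Ar s t X f U"
    unfolding subrep_def
  proof (intro conjI ballI)
    fix j assume "j \<in> V"
    then show "vs.subspace (U j)" "U j \<subseteq> X j"
      using Xsub sub0 vs.subspace_0 by (auto simp: U_def)
  next
    fix a assume a: "a \<in> Ar"
    show "f a ` U (s a) \<subseteq> U (t a)"
    proof (cases "s a = i")
      case True
      then have "t a \<noteq> i" using noloop a by blast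
      have "X (t a) = {0}"
      proof (rule ccontr)
        assume "X (t a) \<noteq> {0}"
        then have "t a \<in> S" using stv a by (simp add: S_def)
        moreover have "(i, t a) \<in> R" using True a unfolding R_def by blast
        ultimately show False using sink by blast
      qed
      then show ?thesis using fmap[OF a] True \<open>t a \<noteq> i\<close> by (simp add: U_def)
    next
      case False
      then show ?thesis using f0 a Xsub[OF iV] vs.subspace_0 by (auto simp: U_def)
    qed
  qed
  have nzU: "rep_nonzero V U" using iV Xi by (auto simp: rep_nonzero_def U_def)
  have dU: "dim_vec scale V U = (\<lambda>k. if k = i then d i else 0)"
    using iV by (auto simp: dim_vec_def U_def d_def dim0 fun_eq_iff)
  have "skew_form V Ar s t (dim_vec scale V U) d \<ge> 0"
  proof -
    have "skew_form V Ar s t (dim_vec scale V U) d =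
      (\<Sum>k\<in>V. \<Sum>j\<in>V. (if k = i then d i else 0) * d j * (n_arrows Ar s t j k - n_arrows Ar s t k j))"
      by (simp add: skew_form_def dU)
    also have "\<dots> = (\<Sum>j\<in>V. d i * d j * (n_arrows Ar s t j i - n_arrows Ar s t i j))"
    proof -
      have "\<And>k. (\<Sum>j\<in>V. (if k = i then d i else 0) * d j * (n_arrows Ar s t j k - n_arrows Ar s t k j))
          = (if k = i then (\<Sum>j\<in>V. d i * d j * (n_arrows Ar s t j i - n_arrows Ar s t i j)) else 0)"
        by simp
      then show ?thesis using finV iV by (simp add: sum.delta)
    qed
    also have "\<dots> \<ge> 0"
    proof (rule sum_nonneg)
      fix j assume j: "j \<in> V"
      show "0 \<le> d i * d j * (n_arrows Ar s t j i - n_arrows Ar s t i j)"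
      proof (cases "j = i")
        case True then show ?thesis by simp
      next
        case False
        then have "d i * d j * (n_arrows Ar s t j i - n_arrows Ar s t i j) = d i * (d j * n_arrows Ar s t j i)"
          using no_out[OF j False] by (simp add: algebra_simps)
        moreover have "0 \<le> d i * (d j * n_arrows Ar s t j i)"
          using dnn nn by (intro mult_nonneg_nonneg) auto
        ultimately show ?thesis by linarith
      qed
    qed
    finally show ?thesis .
  qed
  then have "\<not> (\<exists>j\<in>V. U j \<noteq> X j)" using stab(2)[OF subU nzU] by (force simp: th_def)
  then have Xo: "\<And>j. j \<in> V \<Longrightarrow> j \<noteq> i \<Longrightarrow> X j = {0}" unfolding U_def by metis
  have dz2: "\<And>j. j \<noteq> i \<Longrightarrow> d j = 0"
    using Xo by (auto simp: d_def dim_vec_def dim0)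
  have spanx: "X i = vs.span {x}" if x: "x \<in> X i" "x \<noteq> 0" for x
  proof (rule ccontr)
    assume ne: "X i \<noteq> vs.span {x}"
    define U2 where "U2 = (\<lambda>j. if j = i then vs.span {x} else {0::'e})"
    have "vs.span {x} \<subseteq> X i" using x Xsub[OF iV] vs.span_minimal by auto
    have subU2: "subrep scale V Ar s t X f U2"
      unfolding subrep_def
    proof (intro conjI ballI)
      fix j assume "j \<in> V"
      then show "vs.subspace (U2 j)" "U2 j \<subseteq> X j"
        using Xsub sub0 vs.subspace_0 \<open>vs.span {x} \<subseteq> X i\<close> by (auto simp: U2_def)
    next
      fix a assume a: "a \<in> Ar"
      show "f a ` U2 (s a) \<subseteq> U2 (t a)"
      proof (cases "s a = i")
        case True
        then have "t a \<noteq> i" using noloop a by blast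
        then have "X (t a) = {0}" using Xo stv a by blast
        then show ?thesis using fmap[OF a] True \<open>t a \<noteq> i\<close> \<open>vs.span {x} \<subseteq> X i\<close>
          by (auto simp: U2_def)
      next
        case False
        then show ?thesis using f0 a vs.span_zero by (auto simp: U2_def)
      qed
    qed
    have nzU2: "rep_nonzero V U2" using iV x vs.span_base[of x "{x}"]
      by (auto simp: rep_nonzero_def U2_def)
    have prU2: "\<exists>j\<in>V. U2 j \<noteq> X j" using iV ne by (auto simp: U2_def)
    have "skew_form V Ar s t (dim_vec scale V U2) d = 0"
      unfolding skew_form_def
    proof (intro sum.neutral ballI)
      fix k j assume "k \<in> V" "j \<in> V"
      show "dim_vec scale V U2 k * d j * (n_arrows Ar s t j k - n_arrows Ar s t k j) = 0"
        using dz2 by (cases "k = i"; cases "j = i") (auto simp: dim_vec_def U2_def dim0)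
    qed
    then show False using stab(2)[OF subU2 nzU2 prU2] by (simp add: th_def)
  qed
  obtain x where x: "x \<in> X i" "x \<noteq> 0"
    using Xi Xsub[OF iV] vs.subspace_0 by blast
  have "vs.dim (X i) = 1"
    using spanx[OF x] x(2) vs.dim_eq_card_independent[of "{x}"] by simp
  moreover have "\<forall>a\<in>Ar. \<forall>y\<in>X (s a). f a y = 0"
  proof (intro ballI)
    fix a y assume a: "a \<in> Ar" and y: "y \<in> X (s a)"
    show "f a y = 0"
    proof (cases "s a = i")
      case True
      then have "X (t a) = {0}" using Xo stv a noloop by metis
      then show ?thesis using fmap[OF a] y by auto
    next
      case False
      then have "y = 0" using Xo stv a y by blast
      then show ?thesis using f0 a by simp
    qed
  qed
  ultimately show ?thesis using iV Xo by (auto simp: iso_simple_def)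
qed

end
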